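(* Let $\beta\in(1,3/2]$ and let $S_\beta$, $T_\beta$, $L_\beta$ be as in the context. Let $\mathcal{S}$ be the Borel $\sigma$-algebra on $S_\beta$, let $\mu$ be an arbitrary $T_\beta$-invariant probability measure on $(S_\beta,\mathcal{S})$, and let $\psi:S_\beta\to S_\beta$ be $\psi(x,y)=\bigl(x,\ \tfrac{1}{\beta-1}-x-y\bigr)$. Put $\nu=\mu\circ\psi^{-1}$. Then the dynamical systems $(S_\beta,\mathcal{S},\mu,T_\beta)$ and $(S_\beta,\mathcal{S},\nu,L_\beta)$ are isomorphic (in the usual measure-theoretic sense).
   Context: Let $\vec q_0=(0,0)$, $\vec q_1=(1,0)$, $\vec q_2=(0,1)$ and $f_{\vec q_i}(\vec z)=(\vec z+\vec q_i)/\beta$ for $i=0,1,2$. $S_\beta$ denotes the attractor of this IFS (the unique nonempty compact set with $S_\beta=\bigcup_i f_{\vec q_i}(S_\beta)$); for $1<\beta\le 3/2$ it equals the closed triangle with vertices $(0,0)$, $(\frac{1}{\beta-1},0)$, $(0,\frac{1}{\beta-1})$. Define the following subsets of $S_\beta$: $E_0=[0,\frac1\beta)\times[0,\frac1\beta)$; $E_1=\{(x,y):0\le y<\frac1\beta,\ \frac{1}{\beta(\beta-1)}<x+y\le\frac{1}{\beta-1}\}$; $E_2=\{(x,y):0\le x<\frac1\beta,\ \frac{1}{\beta(\beta-1)}<x+y\le\frac{1}{\beta-1}\}$; $C_{01}=\{(x,y):x\ge\frac1\beta,\ 0\le y<\frac1\beta,\ x+y\le\frac{1}{\beta(\beta-1)}\}$;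 $C_{12}=\{(x,y):x\ge\frac1\beta,\ y\ge\frac1\beta,\ \frac{1}{\beta(\beta-1)}<x+y\le\frac{1}{\beta-1}\}$; $C_{02}=\{(x,y):0\le x<\frac1\beta,\ y\ge\frac1\beta,\ x+y\le\frac{1}{\beta(\beta-1)}\}$; $C_{012}=\{(x,y):x\ge\frac1\beta,\ y\ge\frac1\beta,\ x+y\le\frac{1}{\beta(\beta-1)}\}$. The greedy map $T_\beta:S_\beta\to S_\beta$ is $T_\beta(\vec z)=\beta\vec z$ on $E_0$; $\beta\vec z-\vec q_1$ on $C_{01}\cup E_1$; $\beta\vec z-\vec q_2$ on $C_{012}\cup C_{12}\cup C_{02}\cup E_2$. The lazy map $L_\beta:S_\beta\to S_\beta$ is $L_\beta(\vec z)=\beta\vec z$ on $C_{012}\cup C_{01}\cup C_{02}\cup E_0$; $\beta\vec z-\vec q_1$ on $C_{12}\cup E_1$; $\beta\vec z-\vec q_2$ on $E_2$. *)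

theory Defs
  imports "HOL-Probability.Probability"
begin

type_synonym pt = "real \<times> real"

definition S_beta :: "real \<Rightarrow> pt set" where
  "S_beta \<beta> = {(x,y). 0 \<le> x \<and> 0 \<le> y \<and> x + y \<le> 1/(\<beta>-1)}"

definition E0 :: "real \<Rightarrow> pt set" where
  "E0 \<beta> = {(x,y). 0 \<le> x \<and> x < 1/\<beta> \<and> 0 \<le> y \<and> y < 1/\<beta>}"
definition E1 :: "real \<Rightarrow> pt set" where
  "E1 \<beta> = {(x,y). 0 \<le> y \<and> y < 1/\<beta> \<and> 1/(\<beta>*(\<beta>-1)) < x + y \<and> x + y \<le> 1/(\<beta>-1)}"
definition E2 :: "real \<Rightarrow> pt set" where
  "E2 \<beta> = {(x,y). 0 \<le> x \<and> x < 1/\<beta> \<and> 1/(\<beta>*(\<beta>-1)) < x + y \<and> x + y \<le> 1/(\<beta>-1)}"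
definition C01 :: "real \<Rightarrow> pt set" where
  "C01 \<beta> = {(x,y). x \<ge> 1/\<beta> \<and> 0 \<le> y \<and> y < 1/\<beta> \<and> x + y \<le> 1/(\<beta>*(\<beta>-1))}"
definition C12 :: "real \<Rightarrow> pt set" where
  "C12 \<beta> = {(x,y). x \<ge> 1/\<beta> \<and> y \<ge> 1/\<beta> \<and> 1/(\<beta>*(\<beta>-1)) < x + y \<and> x + y \<le> 1/(\<beta>-1)}"
definition C02 :: "real \<Rightarrow> pt set" where
  "C02 \<beta> = {(x,y). 0 \<le> x \<and> x < 1/\<beta> \<and> y \<ge> 1/\<beta> \<and> x + y \<le> 1/(\<beta>*(\<beta>-1))}"
definition C012 :: "real \<Rightarrow> pt set" where
  "C012 \<beta> = {(x,y). x \<ge> 1/\<beta> \<and> y \<ge> 1/\<beta> \<and> x + y \<le> 1/(\<beta>*(\<beta>-1))}"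

text \<open>Translation vectors q0 = (0,0), q1 = (1,0), q2 = (0,1).\<close>

definition greedy_map :: "real \<Rightarrow> pt \<Rightarrow> pt" where
  "greedy_map \<beta> z = (let (x,y) = z in
     if z \<in> E0 \<beta> then (\<beta>*x, \<beta>*y)
     else if z \<in> C01 \<beta> \<union> E1 \<beta> then (\<beta>*x - 1, \<beta>*y)
     else if z \<in> C012 \<beta> \<union> C12 \<beta> \<union> C02 \<beta> \<union> E2 \<beta> then (\<beta>*x, \<beta>*y - 1)
     else z)"

definition lazy_map :: "real \<Rightarrow> pt \<Rightarrow> pt" where
  "lazy_map \<beta> z = (let (x,y) = z in
     if z \<in> C012 \<beta> \<union> C01 \<beta> \<union> C02 \<beta> \<union> E0 \<beta> then (\<beta>*x, \<beta>*y)
     else if z \<in> C12 \<beta> \<union> E1 \<beta> then (\<beta>*x - 1, \<beta>*y)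
     else if z \<in> E2 \<beta> then (\<beta>*x, \<beta>*y - 1)
     else z)"

definition psi_map :: "real \<Rightarrow> pt \<Rightarrow> pt" where
  "psi_map \<beta> z = (fst z, 1/(\<beta>-1) - fst z - snd z)"

definition S_borel :: "real \<Rightarrow> pt measure" where
  "S_borel \<beta> = restrict_space borel (S_beta \<beta>)"

definition mps_isomorphic :: "'a measure \<Rightarrow> ('a \<Rightarrow> 'a) \<Rightarrow> 'b measure \<Rightarrow> ('b \<Rightarrow> 'b) \<Rightarrow> bool" where
  "mps_isomorphic M T N S \<longleftrightarrow>
    (\<exists>X' Y' \<phi> \<phi>'.
       X' \<in> sets M \<and> Y' \<in> sets N \<and>
       emeasure M (space M - X') = 0 \<and> emeasure N (space N - Y') = 0 \<and>
       T ` X' \<subseteq> X' \<and> S ` Y' \<subseteq> Y' \<and>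
       bij_betw \<phi> X' Y' \<and> (\<forall>x\<in>X'. \<phi>' (\<phi> x) = x) \<and> (\<forall>y\<in>Y'. \<phi> (\<phi>' y) = y) \<and>
       \<phi> \<in> measurable (restrict_space M X') N \<and>
       \<phi>' \<in> measurable (restrict_space N Y') M \<and>
       (\<forall>A\<in>sets N. emeasure M (\<phi> -` A \<inter> X') = emeasure N A) \<and>
       (\<forall>x\<in>X'. \<phi> (T x) = S (\<phi> x)))"

end

theory Submission
  imports Defs
begin

lemma conj_psi:
  assumes b1: "1 < \<beta>" and b2: "\<beta> \<le> 3/2" and z: "z \<in> S_beta \<beta>"
  shows "psi_map \<beta> (greedy_map \<beta> z) = lazy_map \<beta> (psi_map \<beta> z)"
proof -
  obtain x y where zxy: "z = (x,y)" by (cases z)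
  define a where "a = 1/\<beta>"
  define c where "c = 1/(\<beta>-1)"
  define d where "d = 1/(\<beta>*(\<beta>-1))"
  have cda: "c = d + a" unfolding a_def c_def d_def using b1 by (simp add: field_simps)
  have ad: "2*a \<le> d" unfolding a_def d_def using b1 b2 by (simp add: field_simps)
  have bc: "\<beta>*c - 1 = c" unfolding c_def using b1 by (simp add: field_simps)
  have ap: "a > 0" unfolding a_def using b1 by simp
  have xy: "0 \<le> x" "0 \<le> y" "x + y \<le> c" using z zxy unfolding S_beta_def c_def by auto
  have e: "\<beta>*(c - x - y) = c + 1 - \<beta>*x - \<beta>*y" using bc by (simp add: algebra_simps)
  have e2: "\<beta>*(c - x - y) - 1 = c - \<beta>*x - \<beta>*y" using bc by (simp add: algebra_simps)
  show ?thesis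
    unfolding zxy greedy_map_def lazy_map_def psi_map_def E0_def E1_def E2_def C01_def C12_def C02_def C012_def
    unfolding a_def[symmetric] c_def[symmetric] d_def[symmetric]
    using xy cda ad ap e e2 by (auto simp: Let_def)
qed

theorem theorem3p2:
  fixes \<beta> :: real and \<mu> :: "pt measure"
  assumes "1 < \<beta>" and "\<beta> \<le> 3/2"
    and "sets \<mu> = sets (S_borel \<beta>)" and "space \<mu> = S_beta \<beta>"
    and "prob_space \<mu>"
    and "greedy_map \<beta> \<in> measurable \<mu> \<mu>"
    and "distr \<mu> \<mu> (greedy_map \<beta>) = \<mu>"
  shows "mps_isomorphic \<mu> (greedy_map \<beta>)
           (distr \<mu> (S_borel \<beta>) (psi_map \<beta>)) (lazy_map \<beta>)"
proof -
  let ?S = "S_beta \<beta>"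
  let ?p = "psi_map \<beta>"
  let ?N = "distr \<mu> (S_borel \<beta>) ?p"
  have spB: "space (S_borel \<beta>) = ?S" unfolding S_borel_def by (simp add: space_restrict_space)
  have pS: "?p z \<in> ?S" if "z \<in> ?S" for z
    using that unfolding S_beta_def psi_map_def by auto
  have pp: "?p (?p z) = z" for z unfolding psi_map_def by (cases z) auto
  have pbor: "?p \<in> borel_measurable borel"
    unfolding psi_map_def by (intro borel_measurable_continuous_onI continuous_intros)
  have pmB: "?p \<in> measurable (S_borel \<beta>) (S_borel \<beta>)"
    unfolding S_borel_def
    apply (rule measurable_restrict_space2)
     apply (auto simp: space_restrict_space pS)[1]
    apply (rule measurable_restrict_space1)
    by (rule pbor)
  have pm: "?p \<in> measurable \<mu> (S_borel \<beta>)"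
    using pmB measurable_cong_sets[OF assms(3) refl] by blast
  have sN: "space ?N = ?S" using spB by simp
  have setsN: "sets ?N = sets (S_borel \<beta>)" by simp
  have pm2: "?p \<in> measurable ?N \<mu>"
    using pmB measurable_cong_sets[OF setsN assms(3)] by blast
  have gS: "greedy_map \<beta> z \<in> ?S" if "z \<in> ?S" for z
    using measurable_space[OF assms(6)] that assms(4) by auto
  show ?thesis
    unfolding mps_isomorphic_def
  proof (intro exI conjI)
    show "?S \<in> sets \<mu>" using sets.top[of \<mu>] assms(4) by simp
    show "?S \<in> sets ?N" using sets.top[of ?N] sN by (metis sets.top)
    show "emeasure \<mu> (space \<mu> - ?S) = 0" using assms(4) by simp
    show "emeasure ?N (space ?N - ?S) = 0" using sN by simp
    show "greedy_map \<beta> ` ?S \<subseteq> ?S" using gS by auto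
    show "lazy_map \<beta> ` ?S \<subseteq> ?S"
    proof
      fix w assume "w \<in> lazy_map \<beta> ` ?S"
      then obtain z where z: "z \<in> ?S" "w = lazy_map \<beta> z" by auto
      have "lazy_map \<beta> z = lazy_map \<beta> (?p (?p z))" by (simp add: pp)
      also have "\<dots> = ?p (greedy_map \<beta> (?p z))"
        using conj_psi[OF assms(1,2) pS[OF z(1)]] by simp
      finally show "w \<in> ?S" using z pS gS by simp
    qed
    show "bij_betw ?p ?S ?S"
      by (rule bij_betw_byWitness[where f'="?p"]) (auto simp: pp pS)
    show "\<forall>x\<in>?S. ?p (?p x) = x" by (simp add: pp)
    show "\<forall>y\<in>?S. ?p (?p y) = y" by (simp add: pp)
    show "?p \<in> measurable (restrict_space \<mu> ?S) ?N"
      using pm by (intro measurable_restrict_space1) simp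
    show "?p \<in> measurable (restrict_space ?N ?S) \<mu>"
      using pm2 by (rule measurable_restrict_space1)
    show "\<forall>A\<in>sets ?N. emeasure \<mu> (?p -` A \<inter> ?S) = emeasure ?N A"
      using pm assms(4) by (simp add: emeasure_distr)
    show "\<forall>x\<in>?S. ?p (greedy_map \<beta> x) = lazy_map \<beta> (?p x)"
      using conj_psi[OF assms(1,2)] by blast
  qed
qed

end
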